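(* Let $A$ be a predicate and $(\rho_i)_i$ a family of mixed memories with $\rho_i\models A$ for all $i$ such that $\sum_i\rho_i$ exists. Then $\sum_i\rho_i\models A$.
   Context: Variables are program variables, entangled ghosts or unentangled ghosts. $\ell^2[V]$ is the Hilbert space with orthonormal basis indexed by assignments on $V$; mixed memories over $V$ are positive trace-class operators on $\ell^2[V]$; $\mathrm{tr}_W$ is partial trace; $\mathrm{supp}\,\rho$ is the closure of the range of $\rho$. A mixed memory over $V\cup W$ is $(V,W)$-separable if it is a convergent sum $\sum_i\rho_i\otimes\rho_i'$ of mixed memories over $V$ and $W$. A predicate over $V$ is a closed subspace of $\ell^2[V]$. For program variables $X$, entangled ghosts $E$, unentangled ghosts $U$ and a predicate $A$ over $X\cup E\cup U$, a mixed memory $\rho$ over $X$ satisfies $A$ ($\rho\models A$) iff there exists an $(X\cup E,U)$-separable mixed memory $\rho^\circ$ over $X\cup E\cup U$ with $\mathrm{supp}\,\rho^\circ\subseteq A$ and $\mathrm{tr}_{E\cup U}\rho^\circ=\rho$. *)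

theory Defs
  imports "HOL-Analysis.Analysis"
begin

text \<open>Assignments on a set of variables are represented by the elements of a type.
  Vectors of the Hilbert space l2 over a type are square-summable complex functions;
  operators (mixed memories) are represented by their matrices in the canonical
  orthonormal basis.\<close>

definition l2 :: "('a \<Rightarrow> complex) set" where
  "l2 = {f. (\<lambda>x. (cmod (f x))^2) summable_on UNIV}"

definition l2_norm :: "('a \<Rightarrow> complex) \<Rightarrow> real" where
  "l2_norm f = sqrt (\<Sum>\<^sub>\<infinity>x. (cmod (f x))^2)"

definition l2_closure :: "('a \<Rightarrow> complex) set \<Rightarrow> ('a \<Rightarrow> complex) set" where
  "l2_closure S = {f \<in> l2. \<exists>F. (\<forall>n. F n \<in> S) \<and>
       (\<lambda>n. l2_norm (\<lambda>x. F n x - f x)) \<longlonglongrightarrow> 0}"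

definition is_predicate :: "('a \<Rightarrow> complex) set \<Rightarrow> bool" where
  "is_predicate A \<longleftrightarrow> A \<subseteq> l2 \<and> (\<lambda>x. 0) \<in> A
     \<and> (\<forall>f\<in>A. \<forall>g\<in>A. (\<lambda>x. f x + g x) \<in> A)
     \<and> (\<forall>c. \<forall>f\<in>A. (\<lambda>x. c * f x) \<in> A)
     \<and> l2_closure A \<subseteq> A"

definition positive_matrix :: "('a \<Rightarrow> 'a \<Rightarrow> complex) \<Rightarrow> bool" where
  "positive_matrix \<rho> \<longleftrightarrow> (\<forall>F c. finite F \<longrightarrow>
     Im (\<Sum>x\<in>F. \<Sum>y\<in>F. cnj (c x) * \<rho> x y * c y) = 0 \<and>
     Re (\<Sum>x\<in>F. \<Sum>y\<in>F. cnj (c x) * \<rho> x y * c y) \<ge> 0)"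

text \<open>Mixed memory: positive trace-class operator (positive with summable diagonal).\<close>
definition mixed_memory :: "('a \<Rightarrow> 'a \<Rightarrow> complex) \<Rightarrow> bool" where
  "mixed_memory \<rho> \<longleftrightarrow> positive_matrix \<rho> \<and> (\<lambda>x. Re (\<rho> x x)) summable_on UNIV"

definition mm_has_sum :: "('i \<Rightarrow> 'a \<Rightarrow> 'a \<Rightarrow> complex) \<Rightarrow> 'i set \<Rightarrow> ('a \<Rightarrow> 'a \<Rightarrow> complex) \<Rightarrow> bool" where
  "mm_has_sum \<rho> I \<sigma> \<longleftrightarrow> mixed_memory \<sigma> \<and> (\<forall>x y. ((\<lambda>i. \<rho> i x y) has_sum \<sigma> x y) I)"

definition mm_apply :: "('a \<Rightarrow> 'a \<Rightarrow> complex) \<Rightarrow> ('a \<Rightarrow> complex) \<Rightarrow> ('a \<Rightarrow> complex)" where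
  "mm_apply \<rho> \<psi> = (\<lambda>x. \<Sum>\<^sub>\<infinity>y. \<rho> x y * \<psi> y)"

definition supp :: "('a \<Rightarrow> 'a \<Rightarrow> complex) \<Rightarrow> ('a \<Rightarrow> complex) set" where
  "supp \<rho> = l2_closure (mm_apply \<rho> ` l2)"

definition tensor :: "('v \<Rightarrow> 'v \<Rightarrow> complex) \<Rightarrow> ('w \<Rightarrow> 'w \<Rightarrow> complex) \<Rightarrow> ('v \<times> 'w \<Rightarrow> 'v \<times> 'w \<Rightarrow> complex)" where
  "tensor \<rho> \<sigma> = (\<lambda>(v, w) (v', w'). \<rho> v v' * \<sigma> w w')"

definition separable :: "('v \<times> 'w \<Rightarrow> 'v \<times> 'w \<Rightarrow> complex) \<Rightarrow> bool" where
  "separable \<rho> \<longleftrightarrow> (\<exists>(\<rho>s :: nat \<Rightarrow> 'v \<Rightarrow> 'v \<Rightarrow> complex) (\<sigma>s :: nat \<Rightarrow> 'w \<Rightarrow> 'w \<Rightarrow> complex).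
      (\<forall>i. mixed_memory (\<rho>s i) \<and> mixed_memory (\<sigma>s i)) \<and>
      mm_has_sum (\<lambda>i. tensor (\<rho>s i) (\<sigma>s i)) UNIV \<rho>)"

text \<open>Partial trace over the entangled and unentangled ghosts E \<union> U.\<close>
definition ptrace_EU :: "((('x \<times> 'e) \<times> 'u) \<Rightarrow> (('x \<times> 'e) \<times> 'u) \<Rightarrow> complex) \<Rightarrow> 'x \<Rightarrow> 'x \<Rightarrow> complex" where
  "ptrace_EU \<rho> = (\<lambda>x x'. \<Sum>\<^sub>\<infinity>(e, u). \<rho> ((x, e), u) ((x', e), u))"

text \<open>Satisfaction; 'x, 'e, 'u are the assignments on X, E, U.\<close>
definition satisfies :: "('x \<Rightarrow> 'x \<Rightarrow> complex) \<Rightarrow> ((('x \<times> 'e) \<times> 'u) \<Rightarrow> complex) set \<Rightarrow> bool" where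
  "satisfies \<rho> A \<longleftrightarrow> (\<exists>\<rho>o :: (('x \<times> 'e) \<times> 'u) \<Rightarrow> (('x \<times> 'e) \<times> 'u) \<Rightarrow> complex.
      mixed_memory \<rho>o \<and> separable \<rho>o \<and> supp \<rho>o \<subseteq> A \<and> ptrace_EU \<rho>o = \<rho>)"

end

theory Submission
  imports Defs
begin

lemma psd_use:
  assumes "positive_matrix T" "finite F"
  shows "Im (\<Sum>x\<in>F. \<Sum>y\<in>F. cnj (c x) * T x y * c y) = 0"
    "Re (\<Sum>x\<in>F. \<Sum>y\<in>F. cnj (c x) * T x y * c y) \<ge> 0"
  using assms unfolding positive_matrix_def by auto

lemma psd_diag:
  assumes "positive_matrix T"
  shows "T a a = complex_of_real (Re (T a a))" "Re (T a a) \<ge> 0"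
  using psd_use[OF assms, of "{a}" "\<lambda>_. 1"] by (auto simp: complex_eq_iff)
lemma psd_cs:
  assumes "positive_matrix T"
  shows "(cmod (T a b))^2 \<le> Re (T a a) * Re (T b b)"
proof (cases "a = b")
  case True
  then show ?thesis using psd_diag[OF assms, of a]
    by (metis norm_of_real power2_eq_square real_norm_def abs_of_nonneg order_refl)
next
  case False
  define p where "p = Re (T a a)"
  define q where "q = Re (T b b)"
  define z where "z = T a b"
  define w where "w = T b a"
  have Taa: "T a a = complex_of_real p" and Tbb: "T b b = complex_of_real q"
    and p0: "p \<ge> 0" and q0: "q \<ge> 0"
    using psd_diag[OF assms] p_def q_def by auto
  have E: "Im (cnj \<alpha> * complex_of_real p * \<alpha> + cnj \<alpha> * z * \<beta> + cnj \<beta> * w * \<alpha> + cnj \<beta> * complex_of_real q * \<beta>) = 0 \<and>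
           Re (cnj \<alpha> * complex_of_real p * \<alpha> + cnj \<alpha> * z * \<beta> + cnj \<beta> * w * \<alpha> + cnj \<beta> * complex_of_real q * \<beta>) \<ge> 0" for \<alpha> \<beta>
  proof -
    define c where "c = (\<lambda>x. if x = a then \<alpha> else \<beta>)"
    have "Im (\<Sum>x\<in>{a,b}. \<Sum>y\<in>{a,b}. cnj (c x) * T x y * c y) = 0 \<and>
          Re (\<Sum>x\<in>{a,b}. \<Sum>y\<in>{a,b}. cnj (c x) * T x y * c y) \<ge> 0"
      using psd_use[OF assms, of "{a,b}" c] by simp
    moreover have "(\<Sum>x\<in>{a,b}. \<Sum>y\<in>{a,b}. cnj (c x) * T x y * c y) =
       cnj \<alpha> * complex_of_real p * \<alpha> + cnj \<alpha> * z * \<beta> + cnj \<beta> * w * \<alpha> + cnj \<beta> * complex_of_real q * \<beta>"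
      using False by (simp add: c_def Taa Tbb z_def w_def)
    ultimately show ?thesis by simp
  qed
  have w1: "Im z + Im w = 0" using E[of 1 1] by simp
  have w2: "Re z - Re w = 0" using E[of 1 \<i>] by simp
  have wz: "w = cnj z" using w1 w2 by (simp add: complex_eq_iff)
  define u where "u = (Re z)^2 + (Im z)^2"
  have u: "(cmod z)^2 = u" by (simp add: u_def cmod_power2)
  have F: "s * s * p - 2 * s * u + q * u \<ge> 0" for s :: real
  proof -
    have "Re (cnj (complex_of_real s) * complex_of_real p * of_real s + cnj (complex_of_real s) * z * (- cnj z) + cnj (- cnj z) * w * of_real s + cnj (- cnj z) * complex_of_real q * (- cnj z)) \<ge> 0"
      using E by blast
    moreover have "Re (cnj (complex_of_real s) * complex_of_real p * of_real s + cnj (complex_of_real s) * z * (- cnj z) + cnj (- cnj z) * w * of_real s + cnj (- cnj z) * complex_of_real q * (- cnj z)) = s * s * p - 2 * s * u + q * u"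
      by (simp add: wz u_def power2_eq_square algebra_simps)
    ultimately show ?thesis by linarith
  qed
  have "u \<le> p * q"
  proof (cases "q > 0")
    case True
    have "q*q*p - 2*q*u + q*u \<ge> 0" using F[of q] by simp
    then have "q * (q*p - u) \<ge> 0" by (simp add: algebra_simps)
    then show ?thesis using True by (simp add: zero_le_mult_iff algebra_simps)
  next
    case False
    then have q: "q = 0" using q0 by simp
    have u0: "u \<ge> 0" by (simp add: u_def)
    define s where "s = u/(p+1)"
    have su: "u = s * (p+1)" using p0 by (simp add: s_def)
    have "s * s * p - 2 * s * u \<ge> 0" using F[of s] q by simp
    then have "s * s * p - 2 * s * (s * (p+1)) \<ge> 0" using su by simp
    then have "s * s * (p + 2) \<le> 0" by (simp add: algebra_simps)
    then have "\<not> s * s > 0"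
      using p0 mult_pos_pos[of "s * s" "p + 2"] by linarith
    then have "s = 0" by (auto simp: zero_less_mult_iff)
    then have "u = 0" using su by simp
    then show ?thesis using q by simp
  qed
  then show ?thesis using u p_def q_def z_def by simp
qed

lemma psd_cs2:
  assumes "positive_matrix T"
  shows "cmod (T a b) \<le> sqrt (Re (T a a)) * sqrt (Re (T b b))"
proof -
  have "cmod (T a b) = sqrt ((cmod (T a b))^2)" by simp
  also have "\<dots> \<le> sqrt (Re (T a a) * Re (T b b))"
    using psd_cs[OF assms] real_sqrt_le_mono by blast
  also have "\<dots> = sqrt (Re (T a a)) * sqrt (Re (T b b))" by (simp add: real_sqrt_mult)
  finally show ?thesis .
qed

lemma amgm_sqrt:
  fixes p b :: real
  assumes "p \<ge> 0"
  shows "sqrt p * b \<le> (p + b^2) / 2"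
proof -
  have "0 \<le> (sqrt p - b)^2" by simp
  then show ?thesis using assms by (simp add: power2_diff power2_eq_square algebra_simps)
qed

lemma psd_cs3:
  assumes "positive_matrix T"
  shows "cmod (T a b) \<le> (Re (T a a) + Re (T b b)) / 2"
proof -
  have "cmod (T a b) \<le> sqrt (Re (T a a)) * sqrt (Re (T b b))" by (rule psd_cs2[OF assms])
  also have "\<dots> \<le> (Re (T a a) + (sqrt (Re (T b b)))^2) / 2"
    by (rule amgm_sqrt) (use psd_diag[OF assms] in auto)
  also have "\<dots> = (Re (T a a) + Re (T b b)) / 2" using psd_diag(2)[OF assms, of b] by simp
  finally show ?thesis .
qed

lemma has_sum_sum_fin:
  fixes f :: "'j \<Rightarrow> 'i \<Rightarrow> 'b::topological_comm_monoid_add"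
  assumes "finite F" "\<And>j. j \<in> F \<Longrightarrow> (f j has_sum s j) I"
  shows "((\<lambda>i. \<Sum>j\<in>F. f j i) has_sum (\<Sum>j\<in>F. s j)) I"
  using assms
proof (induction F rule: finite_induct)
  case empty
  then show ?case by simp
next
  case (insert x F)
  then show ?case by (simp add: has_sum_add)
qed

lemma has_sum_diff_c:
  fixes f g :: "'i \<Rightarrow> 'b::topological_ab_group_add"
  assumes "(f has_sum a) I" "(g has_sum b) I"
  shows "((\<lambda>i. f i - g i) has_sum (a - b)) I"
proof -
  have "((\<lambda>i. - g i) has_sum (- b)) I" using assms(2) by (simp add: has_sum_uminus)
  from has_sum_add[OF assms(1) this] show ?thesis by simp
qed

lemma psd_has_sum:
  fixes X :: "'i \<Rightarrow> 'a \<Rightarrow> 'a \<Rightarrow> complex" and T :: "'a \<Rightarrow> 'a \<Rightarrow> complex"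
  assumes "\<And>i. i \<in> I \<Longrightarrow> positive_matrix (X i)"
    and "\<And>a b. ((\<lambda>i. X i a b) has_sum T a b) I"
  shows "positive_matrix T"
  unfolding positive_matrix_def
proof (intro allI impI)
  fix F :: "'a set" and c :: "'a \<Rightarrow> complex"
  assume fin: "finite F"
  have h: "((\<lambda>i. \<Sum>x\<in>F. \<Sum>y\<in>F. cnj (c x) * X i x y * c y) has_sum
            (\<Sum>x\<in>F. \<Sum>y\<in>F. cnj (c x) * T x y * c y)) I"
    by (intro has_sum_sum_fin fin has_sum_cmult_left has_sum_cmult_right assms)
  have "((\<lambda>i. Im (\<Sum>x\<in>F. \<Sum>y\<in>F. cnj (c x) * X i x y * c y)) has_sum
            Im (\<Sum>x\<in>F. \<Sum>y\<in>F. cnj (c x) * T x y * c y)) I"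
    by (rule has_sum_Im[OF h])
  moreover have "((\<lambda>i. Im (\<Sum>x\<in>F. \<Sum>y\<in>F. cnj (c x) * X i x y * c y)) has_sum 0) I"
    by (rule has_sum_0) (use psd_use(1)[OF assms(1) fin] in blast)
  ultimately have im: "Im (\<Sum>x\<in>F. \<Sum>y\<in>F. cnj (c x) * T x y * c y) = 0"
    using has_sum_unique by blast
  have "((\<lambda>i. Re (\<Sum>x\<in>F. \<Sum>y\<in>F. cnj (c x) * X i x y * c y)) has_sum
            Re (\<Sum>x\<in>F. \<Sum>y\<in>F. cnj (c x) * T x y * c y)) I"
    by (rule has_sum_Re[OF h])
  then have re: "Re (\<Sum>x\<in>F. \<Sum>y\<in>F. cnj (c x) * T x y * c y) \<ge> 0"
    by (rule has_sum_nonneg) (use psd_use(2)[OF assms(1) fin] in blast)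
  show "Im (\<Sum>x\<in>F. \<Sum>y\<in>F. cnj (c x) * T x y * c y) = 0 \<and>
        0 \<le> Re (\<Sum>x\<in>F. \<Sum>y\<in>F. cnj (c x) * T x y * c y)" using im re by simp
qed



lemma mm_diag_summable:
  assumes "mixed_memory T"
  shows "(\<lambda>a. Re (T a a)) summable_on UNIV"
  using assms unfolding mixed_memory_def by simp

lemma mm_pos: "mixed_memory T \<Longrightarrow> positive_matrix T"
  unfolding mixed_memory_def by simp

lemma mm_diag_nonneg: 
  assumes "mixed_memory T" shows "Re (T a a) \<ge> 0"
  by (rule psd_diag(2)[OF mm_pos[OF assms]])

lemma l2_summable: "\<psi> \<in> l2 \<Longrightarrow> (\<lambda>y. (cmod (\<psi> y))^2) summable_on UNIV"
  unfolding l2_def by simp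

lemma mm_aux_summable:
  assumes "mixed_memory T" "\<psi> \<in> l2"
  shows "(\<lambda>y. (Re (T y y) + (cmod (\<psi> y))^2) / 2) summable_on UNIV"
proof -
  have "(\<lambda>y. Re (T y y) + (cmod (\<psi> y))^2) summable_on UNIV"
    by (intro summable_on_add mm_diag_summable l2_summable assms)
  then show ?thesis using has_sum_divide_const[of _ UNIV _ 2] unfolding summable_on_def by blast
qed

lemma mm_K_summable:
  assumes "mixed_memory T" "\<psi> \<in> l2"
  shows "(\<lambda>y. sqrt (Re (T y y)) * cmod (\<psi> y)) summable_on UNIV"
proof (rule summable_on_comparison_test[OF mm_aux_summable[OF assms]])
  fix y
  have "Re (T y y) \<ge> 0" using mm_diag_nonneg[OF assms(1)] by blast
  then show "sqrt (Re (T y y)) * cmod (\<psi> y) \<le> (Re (T y y) + (cmod (\<psi> y))^2) / 2"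
    by (rule amgm_sqrt)
  show "0 \<le> sqrt (Re (T y y)) * cmod (\<psi> y)" using mm_diag_nonneg[OF assms(1), of y] by simp
qed

lemma mm_K_bound:
  assumes "mixed_memory T" "\<psi> \<in> l2"
  shows "(\<Sum>\<^sub>\<infinity>y. sqrt (Re (T y y)) * cmod (\<psi> y)) \<le>
    ((\<Sum>\<^sub>\<infinity>y. Re (T y y)) + (\<Sum>\<^sub>\<infinity>y. (cmod (\<psi> y))^2)) / 2"
proof -
  have "(\<Sum>\<^sub>\<infinity>y. sqrt (Re (T y y)) * cmod (\<psi> y)) \<le> (\<Sum>\<^sub>\<infinity>y. (Re (T y y) + (cmod (\<psi> y))^2) / 2)"
  proof (rule infsum_mono[OF mm_K_summable[OF assms] mm_aux_summable[OF assms]])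
    fix y
    have "Re (T y y) \<ge> 0" using mm_diag_nonneg[OF assms(1)] by blast
    then show "sqrt (Re (T y y)) * cmod (\<psi> y) \<le> (Re (T y y) + (cmod (\<psi> y))^2) / 2"
      by (rule amgm_sqrt)
  qed
  also have "\<dots> = ((\<Sum>\<^sub>\<infinity>y. Re (T y y)) + (\<Sum>\<^sub>\<infinity>y. (cmod (\<psi> y))^2)) / 2"
    using infsum_add[OF mm_diag_summable[OF assms(1)] l2_summable[OF assms(2)]]
      infsumI[OF has_sum_divide_const[OF has_sum_infsum[OF summable_on_add[OF mm_diag_summable[OF assms(1)] l2_summable[OF assms(2)]]], of 2]]
    by simp
  finally show ?thesis .
qed

lemma mm_row_bound:
  assumes "mixed_memory T"
  shows "cmod (T x y * \<psi> y) \<le> sqrt (Re (T x x)) * (sqrt (Re (T y y)) * cmod (\<psi> y))"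
proof -
  have "cmod (T x y) \<le> sqrt (Re (T x x)) * sqrt (Re (T y y))"
    using psd_cs2[OF mm_pos[OF assms]] by blast
  then show ?thesis by (simp add: norm_mult) (metis mult.assoc mult_right_mono norm_ge_zero)
qed

lemma mm_row_summable:
  assumes "mixed_memory T" "\<psi> \<in> l2"
  shows "(\<lambda>y. T x y * \<psi> y) summable_on UNIV"
proof -
  have "(\<lambda>y. sqrt (Re (T x x)) * (sqrt (Re (T y y)) * cmod (\<psi> y))) summable_on UNIV"
    by (intro summable_on_cmult_right mm_K_summable assms)
  then have "(\<lambda>y. norm (T x y * \<psi> y)) summable_on UNIV"
    by (rule Infinite_Sum.abs_summable_on_comparison_test') (use mm_row_bound[OF assms(1)] in auto)
  then show ?thesis by (rule Infinite_Sum.abs_summable_summable)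
qed

lemma mm_apply_bound:
  assumes "mixed_memory T" "\<psi> \<in> l2"
  shows "cmod (mm_apply T \<psi> x) \<le> sqrt (Re (T x x)) * (\<Sum>\<^sub>\<infinity>y. sqrt (Re (T y y)) * cmod (\<psi> y))"
proof -
  have abs: "(\<lambda>y. norm (T x y * \<psi> y)) summable_on UNIV"
    using mm_row_summable[OF assms] by (simp add: summable_on_iff_abs_summable_on_complex)
  have "cmod (mm_apply T \<psi> x) \<le> (\<Sum>\<^sub>\<infinity>y. norm (T x y * \<psi> y))"
    unfolding mm_apply_def by (rule norm_infsum_bound[OF abs])
  also have "\<dots> \<le> (\<Sum>\<^sub>\<infinity>y. sqrt (Re (T x x)) * (sqrt (Re (T y y)) * cmod (\<psi> y)))"
    by (rule infsum_mono[OF abs summable_on_cmult_right[OF mm_K_summable[OF assms]]])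
       (rule mm_row_bound[OF assms(1)])
  also have "\<dots> = sqrt (Re (T x x)) * (\<Sum>\<^sub>\<infinity>y. sqrt (Re (T y y)) * cmod (\<psi> y))"
    by (rule infsum_cmult_right) (use mm_K_summable[OF assms] in auto)
  finally show ?thesis .
qed

lemma mm_apply_l2:
  assumes "mixed_memory T" "\<psi> \<in> l2"
  defines "K \<equiv> (\<Sum>\<^sub>\<infinity>y. sqrt (Re (T y y)) * cmod (\<psi> y))"
  shows "mm_apply T \<psi> \<in> l2"
    and "(\<Sum>\<^sub>\<infinity>x. (cmod (mm_apply T \<psi> x))^2) \<le> (\<Sum>\<^sub>\<infinity>x. Re (T x x)) * K^2"
proof -
  have p0: "Re (T x x) \<ge> 0" for x using mm_diag_nonneg[OF assms(1)] by blast
  have b: "(cmod (mm_apply T \<psi> x))^2 \<le> Re (T x x) * K^2" for x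
  proof -
    have "(cmod (mm_apply T \<psi> x))^2 \<le> (sqrt (Re (T x x)) * K)^2"
      by (rule power_mono) (use mm_apply_bound[OF assms(1,2), of x] in \<open>auto simp: K_def\<close>)
    also have "\<dots> = Re (T x x) * K^2" using p0[of x] by (simp add: power_mult_distrib)
    finally show ?thesis .
  qed
  have s: "(\<lambda>x. Re (T x x) * K^2) summable_on UNIV"
    by (rule summable_on_cmult_left[OF mm_diag_summable[OF assms(1)]])
  have s2: "(\<lambda>x. (cmod (mm_apply T \<psi> x))^2) summable_on UNIV"
    by (rule summable_on_comparison_test[OF s]) (use b in auto)
  then show "mm_apply T \<psi> \<in> l2" unfolding l2_def by simp
  have "(\<Sum>\<^sub>\<infinity>x. (cmod (mm_apply T \<psi> x))^2) \<le> (\<Sum>\<^sub>\<infinity>x. Re (T x x) * K^2)"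
    by (rule infsum_mono[OF s2 s]) (rule b)
  also have "\<dots> = (\<Sum>\<^sub>\<infinity>x. Re (T x x)) * K^2"
    by (rule infsum_cmult_left) (use mm_diag_summable[OF assms(1)] in auto)
  finally show "(\<Sum>\<^sub>\<infinity>x. (cmod (mm_apply T \<psi> x))^2) \<le> (\<Sum>\<^sub>\<infinity>x. Re (T x x)) * K^2" .
qed



definition assoc3 :: "'x \<times> ('e \<times> 'u) \<Rightarrow> ('x \<times> 'e) \<times> 'u" where
  "assoc3 p = ((fst p, fst (snd p)), snd (snd p))"

lemma assoc3_bij: "bij_betw assoc3 UNIV UNIV"
  by (rule bij_betwI[of _ _ _ "\<lambda>((x,e),u). (x,(e,u))"]) (auto simp: assoc3_def)

lemma tr_ptrace:
  fixes R :: "(('x \<times> 'e) \<times> 'u) \<Rightarrow> (('x \<times> 'e) \<times> 'u) \<Rightarrow> complex"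
  assumes "mixed_memory R"
  shows "(\<Sum>\<^sub>\<infinity>a. Re (R a a)) = (\<Sum>\<^sub>\<infinity>x. Re (ptrace_EU R x x))"
proof -
  define g where "g a = Re (R a a)" for a
  have gs: "g summable_on UNIV" unfolding g_def by (rule mm_diag_summable[OF assms])
  have gs2: "(\<lambda>p. g (assoc3 p)) summable_on UNIV"
    using gs summable_on_reindex_bij_betw[OF assoc3_bij] by blast
  have "(\<Sum>\<^sub>\<infinity>a. g a) = (\<Sum>\<^sub>\<infinity>p. g (assoc3 p))"
    using infsum_reindex_bij_betw[OF assoc3_bij, of g] by simp
  also have "\<dots> = (\<Sum>\<^sub>\<infinity>x. \<Sum>\<^sub>\<infinity>eu. g (assoc3 (x, eu)))"
    using infsum_Sigma_banach[of "\<lambda>p. g (assoc3 p)" UNIV "\<lambda>_. UNIV"] gs2 by simp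
  also have "\<dots> = (\<Sum>\<^sub>\<infinity>x. Re (ptrace_EU R x x))"
  proof (rule infsum_cong)
    fix x
    have s1: "(\<lambda>eu. g (assoc3 (x, eu))) summable_on UNIV"
      using summable_on_SigmaD1[of "\<lambda>x eu. g (assoc3 (x, eu))" UNIV "\<lambda>_. UNIV" x] gs2
      by (simp add: case_prod_unfold)
    have eq: "(\<lambda>(e, u). R ((x, e), u) ((x, e), u)) = (\<lambda>eu. complex_of_real (g (assoc3 (x, eu))))"
    proof (rule ext)
      fix eu :: "'e \<times> 'u"
      show "(case eu of (e, u) \<Rightarrow> R ((x, e), u) ((x, e), u)) = complex_of_real (g (assoc3 (x, eu)))"
        by (cases eu) (simp only: g_def assoc3_def prod.case fst_conv snd_conv, rule psd_diag(1)[OF mm_pos[OF assms]])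
    qed
    have "Re (ptrace_EU R x x) = Re (\<Sum>\<^sub>\<infinity>eu. complex_of_real (g (assoc3 (x, eu))))"
      unfolding ptrace_EU_def eq by simp
    also have "\<dots> = (\<Sum>\<^sub>\<infinity>eu. Re (complex_of_real (g (assoc3 (x, eu)))))"
      by (rule infsum_Re[symmetric]) (rule summable_on_of_real[OF s1])
    finally show "(\<Sum>\<^sub>\<infinity>eu. g (assoc3 (x, eu))) = Re (ptrace_EU R x x)" by simp
  qed
  finally show ?thesis unfolding g_def .
qed

lemma tr_sum_le:
  fixes \<rho> :: "'i \<Rightarrow> 'x \<Rightarrow> 'x \<Rightarrow> complex"
  assumes "\<forall>i. mixed_memory (\<rho> i)" "mm_has_sum \<rho> UNIV \<sigma>" "finite G"
  shows "(\<Sum>i\<in>G. \<Sum>\<^sub>\<infinity>x. Re (\<rho> i x x)) \<le> (\<Sum>\<^sub>\<infinity>x. Re (\<sigma> x x))"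
proof -
  have ms: "mixed_memory \<sigma>" and hs: "\<And>x y. ((\<lambda>i. \<rho> i x y) has_sum \<sigma> x y) UNIV"
    using assms(2) unfolding mm_has_sum_def by auto
  have hsum: "((\<lambda>x. \<Sum>i\<in>G. Re (\<rho> i x x)) has_sum (\<Sum>i\<in>G. \<Sum>\<^sub>\<infinity>x. Re (\<rho> i x x))) UNIV"
    by (rule has_sum_sum_fin[OF assms(3)]) (rule has_sum_infsum[OF mm_diag_summable], use assms(1) in blast)
  have hs2: "((\<lambda>x. Re (\<sigma> x x)) has_sum (\<Sum>\<^sub>\<infinity>x. Re (\<sigma> x x))) UNIV"
    by (rule has_sum_infsum[OF mm_diag_summable[OF ms]])
  show ?thesis
  proof (rule has_sum_mono[OF hsum hs2])
    fix x
    have "((\<lambda>i. Re (\<rho> i x x)) has_sum Re (\<sigma> x x)) UNIV" by (rule has_sum_Re[OF hs])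
    then show "(\<Sum>i\<in>G. Re (\<rho> i x x)) \<le> Re (\<sigma> x x)"
      by (rule finite_sum_le_has_sum[OF _ assms(3)]) (auto intro: mm_diag_nonneg[OF spec[OF assms(1)]])
  qed
qed



lemma pred_zero: "is_predicate A \<Longrightarrow> (\<lambda>x. 0) \<in> A"
  unfolding is_predicate_def by (elim conjE)
lemma pred_add: "is_predicate A \<Longrightarrow> f \<in> A \<Longrightarrow> g \<in> A \<Longrightarrow> (\<lambda>x. f x + g x) \<in> A"
  unfolding is_predicate_def by (elim conjE) (drule bspec, assumption, drule bspec, assumption, assumption)
lemma pred_closed: "is_predicate A \<Longrightarrow> l2_closure A \<subseteq> A"
  unfolding is_predicate_def by (elim conjE)

lemma l2_closure_mono: "S \<subseteq> T \<Longrightarrow> l2_closure S \<subseteq> l2_closure T"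
  unfolding l2_closure_def by blast

lemma apply_in_supp:
  assumes "mixed_memory T" "\<psi> \<in> l2"
  shows "mm_apply T \<psi> \<in> supp T"
proof -
  have f: "mm_apply T \<psi> \<in> l2" by (rule mm_apply_l2(1)[OF assms])
  have "(\<lambda>n::nat. l2_norm (\<lambda>x. mm_apply T \<psi> x - mm_apply T \<psi> x)) \<longlonglongrightarrow> 0"
    by (simp add: l2_norm_def)
  moreover have "\<forall>n::nat. (\<lambda>n. mm_apply T \<psi>) n \<in> mm_apply T ` l2" using assms(2) by simp
  ultimately show ?thesis unfolding supp_def l2_closure_def using f
    by (intro CollectI conjI exI[of _ "\<lambda>n::nat. mm_apply T \<psi>"]) simp_all
qed

lemma pred_sum:
  assumes A: "is_predicate A" and G: "finite G" and f: "\<And>i. i \<in> G \<Longrightarrow> f i \<in> A"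
  shows "(\<lambda>x. \<Sum>i\<in>G. f i x) \<in> A"
  using G f
proof (induction G rule: finite_induct)
  case empty
  then show ?case using pred_zero[OF A] by simp
next
  case (insert j G)
  have "(\<lambda>x. f j x + (\<Sum>i\<in>G. f i x)) \<in> A"
    using insert by (intro pred_add[OF A]) auto
  then show ?case using insert by simp
qed

context
  fixes R :: "'i \<Rightarrow> 'a \<Rightarrow> 'a \<Rightarrow> complex"
  assumes Rmm: "\<And>i. mixed_memory (R i)"
    and F1: "(\<lambda>(i,a). Re (R i a a)) summable_on UNIV"
begin

lemma fam_F1':
  shows "(\<lambda>(a,i). Re (R i a a)) summable_on UNIV"
  using F1 summable_on_swap[of "\<lambda>(i,a). Re (R i a a)" UNIV UNIV] by (simp add: case_prod_unfold)

lemma fam_Dsec: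
  shows "(\<lambda>i. Re (R i a a)) summable_on UNIV"
  using summable_on_SigmaD1[of "\<lambda>a i. Re (R i a a)" UNIV "\<lambda>_. UNIV" a] fam_F1' by simp

lemma fam_summable:
  shows "(\<lambda>i. R i a b) summable_on UNIV"
proof -
  have "(\<lambda>i. (Re (R i a a) + Re (R i b b)) / 2) summable_on UNIV"
  proof -
    have "(\<lambda>i. Re (R i a a) + Re (R i b b)) summable_on UNIV"
      by (rule summable_on_add[OF fam_Dsec fam_Dsec])
    then show ?thesis using has_sum_divide_const[of _ UNIV _ 2] unfolding summable_on_def by blast
  qed
  then have "(\<lambda>i. norm (R i a b)) summable_on UNIV"
    by (rule Infinite_Sum.abs_summable_on_comparison_test') (use psd_cs3[OF mm_pos[OF Rmm]] in auto)
  then show ?thesis by (rule Infinite_Sum.abs_summable_summable)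
qed

lemma fam_Re_diag:
  shows "Re (\<Sum>\<^sub>\<infinity>i. R i a a) = (\<Sum>\<^sub>\<infinity>i. Re (R i a a))"
  by (rule infsum_Re[symmetric, OF fam_summable])

lemma fam_mm:
  shows "mixed_memory (\<lambda>a b. \<Sum>\<^sub>\<infinity>i. R i a b)"
  unfolding mixed_memory_def
proof
  show "positive_matrix (\<lambda>a b. \<Sum>\<^sub>\<infinity>i. R i a b)"
    by (rule psd_has_sum[of UNIV R]) (auto intro: mm_pos[OF Rmm] has_sum_infsum fam_summable)
  have "(\<lambda>a. \<Sum>\<^sub>\<infinity>i. Re (R i a a)) summable_on UNIV"
    using summable_on_SigmaD[of "\<lambda>(a,i). Re (R i a a)" UNIV "\<lambda>_. UNIV"] fam_F1' fam_Dsec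
    by simp
  then show "(\<lambda>a. Re (\<Sum>\<^sub>\<infinity>i. R i a a)) summable_on UNIV"
    by (simp add: fam_Re_diag)
qed

lemma fam_tr:
  shows "((\<lambda>i. \<Sum>\<^sub>\<infinity>a. Re (R i a a)) has_sum (\<Sum>\<^sub>\<infinity>a. Re (\<Sum>\<^sub>\<infinity>i. R i a a))) UNIV"
proof -
  have "(\<Sum>\<^sub>\<infinity>a. Re (\<Sum>\<^sub>\<infinity>i. R i a a)) = (\<Sum>\<^sub>\<infinity>a. \<Sum>\<^sub>\<infinity>i. Re (R i a a))"
    by (simp add: fam_Re_diag)
  also have "\<dots> = (\<Sum>\<^sub>\<infinity>i. \<Sum>\<^sub>\<infinity>a. Re (R i a a))"
    by (rule infsum_swap_banach) (use fam_F1' in simp)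
  finally have eq: "(\<Sum>\<^sub>\<infinity>a. Re (\<Sum>\<^sub>\<infinity>i. R i a a)) = (\<Sum>\<^sub>\<infinity>i. \<Sum>\<^sub>\<infinity>a. Re (R i a a))" .
  have "(\<lambda>i. \<Sum>\<^sub>\<infinity>a. Re (R i a a)) summable_on UNIV"
    using summable_on_SigmaD[of "\<lambda>(i,a). Re (R i a a)" UNIV "\<lambda>_. UNIV"] F1 mm_diag_summable[OF Rmm]
    by simp
  then show ?thesis unfolding eq by (rule has_sum_infsum)
qed


lemma fam_rest_has_sum:
  assumes G: "finite G"
  shows "((\<lambda>i. R i a b) has_sum ((\<Sum>\<^sub>\<infinity>i. R i a b) - (\<Sum>i\<in>G. R i a b))) (UNIV - G)"
proof -
  have h1: "((\<lambda>i. R i a b) has_sum (\<Sum>\<^sub>\<infinity>i. R i a b)) UNIV"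
    by (rule has_sum_infsum[OF fam_summable])
  have "((\<lambda>i. R i a b) has_sum (\<Sum>i\<in>G. R i a b)) G" using G by simp
  then have h2: "((\<lambda>i. if i \<in> G then R i a b else 0) has_sum (\<Sum>i\<in>G. R i a b)) UNIV"
    by (subst has_sum_cong_neutral[where T=G]) auto
  have "((\<lambda>i. R i a b - (if i \<in> G then R i a b else 0)) has_sum
      ((\<Sum>\<^sub>\<infinity>i. R i a b) - (\<Sum>i\<in>G. R i a b))) UNIV"
    by (rule has_sum_diff_c[OF h1 h2])
  then show ?thesis
    by (subst has_sum_cong_neutral[where T=UNIV and g="\<lambda>i. R i a b - (if i \<in> G then R i a b else 0)"]) auto
qed

lemma fam_rest_mm:
  assumes G: "finite G"
  shows "mixed_memory (\<lambda>a b. (\<Sum>\<^sub>\<infinity>i. R i a b) - (\<Sum>i\<in>G. R i a b))"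
    and "((\<lambda>a. Re ((\<Sum>\<^sub>\<infinity>i. R i a a) - (\<Sum>i\<in>G. R i a a))) has_sum
          ((\<Sum>\<^sub>\<infinity>a. Re (\<Sum>\<^sub>\<infinity>i. R i a a)) - (\<Sum>i\<in>G. \<Sum>\<^sub>\<infinity>a. Re (R i a a)))) UNIV"
proof -
  have h1: "((\<lambda>a. Re (\<Sum>\<^sub>\<infinity>i. R i a a)) has_sum (\<Sum>\<^sub>\<infinity>a. Re (\<Sum>\<^sub>\<infinity>i. R i a a))) UNIV"
    by (rule has_sum_infsum[OF mm_diag_summable[OF fam_mm]])
  have h2: "((\<lambda>a. \<Sum>i\<in>G. Re (R i a a)) has_sum (\<Sum>i\<in>G. \<Sum>\<^sub>\<infinity>a. Re (R i a a))) UNIV"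
    by (rule has_sum_sum_fin[OF G]) (rule has_sum_infsum[OF mm_diag_summable[OF Rmm]])
  show hs: "((\<lambda>a. Re ((\<Sum>\<^sub>\<infinity>i. R i a a) - (\<Sum>i\<in>G. R i a a))) has_sum
          ((\<Sum>\<^sub>\<infinity>a. Re (\<Sum>\<^sub>\<infinity>i. R i a a)) - (\<Sum>i\<in>G. \<Sum>\<^sub>\<infinity>a. Re (R i a a)))) UNIV"
    using has_sum_diff_c[OF h1 h2] by simp
  show "mixed_memory (\<lambda>a b. (\<Sum>\<^sub>\<infinity>i. R i a b) - (\<Sum>i\<in>G. R i a b))"
    unfolding mixed_memory_def
  proof
    show "positive_matrix (\<lambda>a b. (\<Sum>\<^sub>\<infinity>i. R i a b) - (\<Sum>i\<in>G. R i a b))"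
      by (rule psd_has_sum[of "UNIV - G" R]) (auto intro: mm_pos[OF Rmm] fam_rest_has_sum[OF G])
    show "(\<lambda>a. Re ((\<Sum>\<^sub>\<infinity>i. R i a a) - (\<Sum>i\<in>G. R i a a))) summable_on UNIV"
      using hs unfolding summable_on_def by blast
  qed
qed

lemma fam_apply_diff:
  assumes G: "finite G" and psi: "\<psi> \<in> l2"
  shows "mm_apply (\<lambda>a b. (\<Sum>\<^sub>\<infinity>i. R i a b) - (\<Sum>i\<in>G. R i a b)) \<psi> x =
         mm_apply (\<lambda>a b. \<Sum>\<^sub>\<infinity>i. R i a b) \<psi> x - (\<Sum>i\<in>G. mm_apply (R i) \<psi> x)"
proof -
  have h1: "((\<lambda>y. (\<Sum>\<^sub>\<infinity>i. R i x y) * \<psi> y) has_sum mm_apply (\<lambda>a b. \<Sum>\<^sub>\<infinity>i. R i a b) \<psi> x) UNIV"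
    unfolding mm_apply_def using has_sum_infsum[OF mm_row_summable[OF fam_mm psi]] by simp
  have h2: "((\<lambda>y. \<Sum>i\<in>G. R i x y * \<psi> y) has_sum (\<Sum>i\<in>G. mm_apply (R i) \<psi> x)) UNIV"
    unfolding mm_apply_def
    by (rule has_sum_sum_fin[OF G]) (rule has_sum_infsum[OF mm_row_summable[OF Rmm psi]])
  have "((\<lambda>y. ((\<Sum>\<^sub>\<infinity>i. R i x y) - (\<Sum>i\<in>G. R i x y)) * \<psi> y) has_sum
      (mm_apply (\<lambda>a b. \<Sum>\<^sub>\<infinity>i. R i a b) \<psi> x - (\<Sum>i\<in>G. mm_apply (R i) \<psi> x))) UNIV"
    using has_sum_diff_c[OF h1 h2] by (simp add: left_diff_distrib sum_distrib_right)
  then show ?thesis unfolding mm_apply_def by (simp add: infsumI)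
qed


lemma fam_supp:
  assumes A: "is_predicate A" and S: "\<And>i. supp (R i) \<subseteq> A"
  shows "supp (\<lambda>a b. \<Sum>\<^sub>\<infinity>i. R i a b) \<subseteq> A"
proof -
  define Om where "Om = (\<lambda>a b. \<Sum>\<^sub>\<infinity>i. R i a b)"
  have Omm: "mixed_memory Om" unfolding Om_def by (rule fam_mm)
  define trO where "trO = (\<Sum>\<^sub>\<infinity>a. Re (\<Sum>\<^sub>\<infinity>i. R i a a))"
  define t where "t i = (\<Sum>\<^sub>\<infinity>a. Re (R i a a))" for i
  have ht: "(t has_sum trO) UNIV" unfolding t_def trO_def by (rule fam_tr)
  have "\<forall>N. \<exists>G. finite G \<and> trO - sum t G < inverse (real (Suc N))"
  proof
    fix N
    have "(sum t \<longlongrightarrow> trO) (finite_subsets_at_top UNIV)" using ht unfolding has_sum_def .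
    then have "eventually (\<lambda>G. trO - inverse (real (Suc N)) < sum t G) (finite_subsets_at_top UNIV)"
      by (rule order_tendstoD(1)) simp
    then obtain X where "finite X" "trO - inverse (real (Suc N)) < sum t X"
      unfolding eventually_finite_subsets_at_top by blast
    then show "\<exists>G. finite G \<and> trO - sum t G < inverse (real (Suc N))" by (intro exI[of _ X]) simp
  qed
  from choice[OF this] obtain G where G0: "\<forall>N. finite (G N) \<and> trO - sum t (G N) < inverse (real (Suc N))"
    by blast
  have G: "\<And>N. finite (G N)" "\<And>N. trO - sum t (G N) < inverse (real (Suc N))"
    using G0 by auto
  have range: "mm_apply Om \<psi> \<in> A" if psi: "\<psi> \<in> l2" for \<psi>
  proof -
    define f where "f = mm_apply Om \<psi>"
    define F where "F N = (\<lambda>x. \<Sum>i\<in>G N. mm_apply (R i) \<psi> x)" for N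
    have FA: "F N \<in> A" for N
      unfolding F_def
      by (rule pred_sum[OF A G(1)]) (use apply_in_supp[OF Rmm psi] S in blast)
    define nps where "nps = (\<Sum>\<^sub>\<infinity>y. (cmod (\<psi> y))^2)"
    have nps0: "nps \<ge> 0" unfolding nps_def by (rule infsum_nonneg) simp
    define M where "M = (1 + nps) / 2"
    have bound: "l2_norm (\<lambda>x. F N x - f x) \<le> sqrt (inverse (real (Suc N))) * M" for N
    proof -
      define T where "T = (\<lambda>a b. (\<Sum>\<^sub>\<infinity>i. R i a b) - (\<Sum>i\<in>G N. R i a b))"
      have Tmm: "mixed_memory T" unfolding T_def by (rule fam_rest_mm(1)[OF G(1)])
      have trT: "(\<Sum>\<^sub>\<infinity>a. Re (T a a)) = trO - sum t (G N)"
        unfolding T_def trO_def t_def by (rule infsumI[OF fam_rest_mm(2)[OF G(1)]])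
      have trT0: "(\<Sum>\<^sub>\<infinity>a. Re (T a a)) \<ge> 0"
        by (rule infsum_nonneg) (rule mm_diag_nonneg[OF Tmm])
      have trT1: "(\<Sum>\<^sub>\<infinity>a. Re (T a a)) \<le> inverse (real (Suc N))"
        using trT G(2)[of N] by simp
      have inv1: "inverse (real (Suc N)) \<le> 1" by (simp add: inverse_le_1_iff)
      define K where "K = (\<Sum>\<^sub>\<infinity>y. sqrt (Re (T y y)) * cmod (\<psi> y))"
      have K0: "K \<ge> 0" unfolding K_def by (rule infsum_nonneg) (simp add: mm_diag_nonneg[OF Tmm])
      have tr1: "(\<Sum>\<^sub>\<infinity>a. Re (T a a)) \<le> 1" using trT1 inv1 by linarith
      have KM: "K \<le> M"
      proof -
        have "K \<le> ((\<Sum>\<^sub>\<infinity>y. Re (T y y)) + nps) / 2"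
          using mm_K_bound[OF Tmm psi] unfolding K_def nps_def .
        also have "\<dots> \<le> M" unfolding M_def using tr1 by (intro divide_right_mono add_right_mono) auto
        finally show ?thesis .
      qed
      have eq: "cmod (F N x - f x) = cmod (mm_apply T \<psi> x)" for x
      proof -
        have "mm_apply T \<psi> x = f x - F N x"
          unfolding T_def f_def F_def Om_def by (rule fam_apply_diff[OF G(1) psi])
        then show ?thesis by (simp add: norm_minus_commute)
      qed
      have "l2_norm (\<lambda>x. F N x - f x) = sqrt (\<Sum>\<^sub>\<infinity>x. (cmod (mm_apply T \<psi> x))^2)"
        unfolding l2_norm_def eq ..
      also have "\<dots> \<le> sqrt ((\<Sum>\<^sub>\<infinity>a. Re (T a a)) * K^2)"
        using mm_apply_l2(2)[OF Tmm psi] unfolding K_def by simp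
      also have "\<dots> \<le> sqrt (inverse (real (Suc N)) * M^2)"
      proof (rule real_sqrt_le_mono, rule mult_mono)
        show "K^2 \<le> M^2" using K0 KM by (simp add: power_mono)
      qed (use trT1 trT0 in auto)
      also have "\<dots> = sqrt (inverse (real (Suc N))) * M"
        using nps0 by (simp add: real_sqrt_mult M_def)
      finally show ?thesis .
    qed
    have lim0: "(\<lambda>N. sqrt (inverse (real (Suc N))) * M) \<longlonglongrightarrow> 0"
      using tendsto_mult[OF tendsto_real_sqrt[OF LIMSEQ_inverse_real_of_nat] tendsto_const[of M]]
      by simp
    have "(\<lambda>N. l2_norm (\<lambda>x. F N x - f x)) \<longlonglongrightarrow> 0"
    proof (rule Lim_null_comparison[OF _ lim0])
      have l2n0: "l2_norm g \<ge> 0" for g :: "'a \<Rightarrow> complex"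
        unfolding l2_norm_def by (simp add: infsum_nonneg)
      show "\<forall>\<^sub>F N in sequentially. norm (l2_norm (\<lambda>x. F N x - f x)) \<le> sqrt (inverse (real (Suc N))) * M"
        by (rule always_eventually) (use bound l2n0 in simp)
    qed
    moreover have "f \<in> l2" unfolding f_def by (rule mm_apply_l2(1)[OF Omm psi])
    ultimately have "f \<in> l2_closure A" unfolding l2_closure_def using FA by blast
    then show ?thesis using pred_closed[OF A] unfolding f_def by blast
  qed
  have "supp Om \<subseteq> l2_closure A"
    unfolding supp_def by (rule l2_closure_mono) (use range in blast)
  then show ?thesis using pred_closed[OF A] unfolding Om_def by blast
qed

end




lemma fam_ptrace:
  fixes R :: "'i \<Rightarrow> (('x \<times> 'e) \<times> 'u) \<Rightarrow> (('x \<times> 'e) \<times> 'u) \<Rightarrow> complex"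
  assumes Rmm: "\<And>i. mixed_memory (R i)"
    and F1: "(\<lambda>(i,a). Re (R i a a)) summable_on UNIV"
  shows "ptrace_EU (\<lambda>a b. \<Sum>\<^sub>\<infinity>i. R i a b) x x' = (\<Sum>\<^sub>\<infinity>i. ptrace_EU (R i) x x')"
proof -
  define pa where "pa eu = ((x, fst eu), snd eu)" for eu :: "'e \<times> 'u"
  define pb where "pb eu = ((x', fst eu), snd eu)" for eu :: "'e \<times> 'u"
  define f where "f eu i = R i (pa eu) (pb eu)" for eu i
  have F1': "(\<lambda>(a,i). Re (R i a a)) summable_on UNIV" by (rule fam_F1'[OF Rmm F1])
  have sa: "(\<lambda>(eu,i). Re (R i (p eu) (p eu))) summable_on UNIV"
    if inj: "inj p" for p :: "'e \<times> 'u \<Rightarrow> ('x \<times> 'e) \<times> 'u"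
  proof -
    define h where "h = (\<lambda>(eu, i). (p eu, i :: 'i))"
    have ih: "inj_on h UNIV" using inj unfolding h_def inj_on_def by auto
    have "(\<lambda>(a,i). Re (R i a a)) summable_on (h ` UNIV)"
      by (rule summable_on_subset[OF F1']) simp
    then have "((\<lambda>(a,i). Re (R i a a)) \<circ> h) summable_on UNIV"
      using summable_on_reindex[OF ih] by blast
    then show ?thesis unfolding h_def by (simp add: o_def case_prod_unfold)
  qed
  have ipa: "inj pa" unfolding pa_def inj_on_def by auto
  have ipb: "inj pb" unfolding pb_def inj_on_def by auto
  have g: "(\<lambda>(eu,i). (Re (R i (pa eu) (pa eu)) + Re (R i (pb eu) (pb eu))) / 2) summable_on UNIV"
  proof -
    have "(\<lambda>(eu,i). Re (R i (pa eu) (pa eu)) + Re (R i (pb eu) (pb eu))) summable_on UNIV"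
      using summable_on_add[OF sa[OF ipa] sa[OF ipb]] by (simp add: case_prod_unfold)
    then show ?thesis using has_sum_divide_const[of _ UNIV _ 2] unfolding summable_on_def
      by (simp add: case_prod_unfold) blast
  qed
  have "(\<lambda>p. norm (f (fst p) (snd p))) summable_on UNIV"
  proof (rule Infinite_Sum.abs_summable_on_comparison_test'[OF g])
    fix p :: "('e \<times> 'u) \<times> 'i"
    obtain eu i where p: "p = (eu, i)" by (cases p)
    show "norm (f (fst p) (snd p)) \<le> (\<lambda>(eu,i). (Re (R i (pa eu) (pa eu)) + Re (R i (pb eu) (pb eu))) / 2) p"
      unfolding p f_def using psd_cs3[OF mm_pos[OF Rmm], of i "pa eu" "pb eu"] by simp
  qed
  then have fs: "(\<lambda>(eu, i). f eu i) summable_on UNIV \<times> UNIV"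
    using Infinite_Sum.abs_summable_summable by (simp add: case_prod_unfold)
  have "ptrace_EU (\<lambda>a b. \<Sum>\<^sub>\<infinity>i. R i a b) x x' = (\<Sum>\<^sub>\<infinity>eu. \<Sum>\<^sub>\<infinity>i. f eu i)"
    unfolding ptrace_EU_def f_def pa_def pb_def by (rule infsum_cong) (auto simp: case_prod_unfold)
  also have "\<dots> = (\<Sum>\<^sub>\<infinity>i. \<Sum>\<^sub>\<infinity>eu. f eu i)"
    by (rule infsum_swap_banach[OF fs])
  also have "\<dots> = (\<Sum>\<^sub>\<infinity>i. ptrace_EU (R i) x x')"
    unfolding ptrace_EU_def f_def pa_def pb_def
    by (intro infsum_cong) (auto simp: case_prod_unfold)
  finally show ?thesis .
qed




lemma tensor_diag:
  assumes "mixed_memory X" "mixed_memory Y"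
  shows "Re (tensor X Y a a) = Re (X (fst a) (fst a)) * Re (Y (snd a) (snd a))"
    and "Re (tensor X Y a a) \<ge> 0"
proof -
  obtain v w where a: "a = (v, w)" by (cases a)
  have "tensor X Y a a = complex_of_real (Re (X v v)) * complex_of_real (Re (Y w w))"
    unfolding a tensor_def
    using psd_diag(1)[OF mm_pos[OF assms(1)], of v] psd_diag(1)[OF mm_pos[OF assms(2)], of w]
    by simp
  then show "Re (tensor X Y a a) = Re (X (fst a) (fst a)) * Re (Y (snd a) (snd a))"
    unfolding a by (simp del: of_real_mult add: of_real_mult[symmetric])
  then show "Re (tensor X Y a a) \<ge> 0"
    using mm_diag_nonneg[OF assms(1)] mm_diag_nonneg[OF assms(2)] by simp
qed

lemma tensor_cs:
  assumes "mixed_memory X" "mixed_memory Y"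
  shows "cmod (tensor X Y a b) \<le> (Re (tensor X Y a a) + Re (tensor X Y b b)) / 2"
proof -
  obtain v w where a: "a = (v, w)" by (cases a)
  obtain v' w' where b: "b = (v', w')" by (cases b)
  define p where "p = Re (X v v) * Re (Y w w)"
  define q where "q = Re (X v' v') * Re (Y w' w')"
  have p0: "p \<ge> 0" and q0: "q \<ge> 0" unfolding p_def q_def
    using mm_diag_nonneg[OF assms(1)] mm_diag_nonneg[OF assms(2)] by auto
  have "cmod (tensor X Y a b) = cmod (X v v') * cmod (Y w w')"
    unfolding a b tensor_def by (simp add: norm_mult)
  also have "\<dots> \<le> (sqrt (Re (X v v)) * sqrt (Re (X v' v'))) * (sqrt (Re (Y w w)) * sqrt (Re (Y w' w')))"
    by (rule mult_mono[OF psd_cs2[OF mm_pos[OF assms(1)]] psd_cs2[OF mm_pos[OF assms(2)]]])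
       (use mm_diag_nonneg[OF assms(1)] in auto)
  also have "\<dots> = sqrt p * sqrt q" unfolding p_def q_def by (simp add: real_sqrt_mult)
  also have "\<dots> \<le> (p + (sqrt q)^2) / 2" by (rule amgm_sqrt[OF p0])
  also have "\<dots> = (p + q) / 2" using q0 by simp
  also have "\<dots> = (Re (tensor X Y a a) + Re (tensor X Y b b)) / 2"
    unfolding p_def q_def using tensor_diag(1)[OF assms] a b by simp
  finally show ?thesis .
qed

lemma zero_mm: "mixed_memory (\<lambda>_ _. 0)"
  unfolding mixed_memory_def positive_matrix_def by simp


lemma fam_sep:
  fixes R :: "'i \<Rightarrow> ('v \<times> 'w) \<Rightarrow> ('v \<times> 'w) \<Rightarrow> complex"
    and P :: "'i \<Rightarrow> nat \<Rightarrow> 'v \<Rightarrow> 'v \<Rightarrow> complex"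
    and Q :: "'i \<Rightarrow> nat \<Rightarrow> 'w \<Rightarrow> 'w \<Rightarrow> complex"
  assumes Rmm: "\<And>i. mixed_memory (R i)"
    and F1: "(\<lambda>(i,a). Re (R i a a)) summable_on UNIV"
    and PQ: "\<And>i n. mixed_memory (P i n) \<and> mixed_memory (Q i n)"
    and RS: "\<And>i. mm_has_sum (\<lambda>n. tensor (P i n) (Q i n)) UNIV (R i)"
  shows "separable (\<lambda>a b. \<Sum>\<^sub>\<infinity>i. R i a b)"
proof -
  define Om where "Om = (\<lambda>a b. \<Sum>\<^sub>\<infinity>i. R i a b)"
  have Omm: "mixed_memory Om" unfolding Om_def by (rule fam_mm[OF Rmm F1])
  define \<tau> where "\<tau> k = tensor (P (fst k) (snd k)) (Q (fst k) (snd k))" for k :: "'i \<times> nat"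
  have Pm: "mixed_memory (P i n)" and Qm: "mixed_memory (Q i n)" for i n using PQ by auto
  have tau_eq: "\<tau> (i, n) = tensor (P i n) (Q i n)" for i n by (simp add: \<tau>_def)
  have tau_hs: "((\<lambda>n. \<tau> (i, n) a b) has_sum R i a b) UNIV" for i a b
    using RS[of i] unfolding mm_has_sum_def tau_eq by blast
  have d0: "Re (\<tau> k a a) \<ge> 0" for k a unfolding \<tau>_def by (rule tensor_diag(2)[OF Pm Qm])
  have tcs: "cmod (\<tau> k a b) \<le> (Re (\<tau> k a a) + Re (\<tau> k b b)) / 2" for k a b
    unfolding \<tau>_def by (rule tensor_cs[OF Pm Qm])
  have dR: "Re (\<tau> (i, n) a a) \<le> Re (R i a a)" for i n a
  proof -
    have "((\<lambda>n. Re (\<tau> (i, n) a a)) has_sum Re (R i a a)) UNIV" by (rule has_sum_Re[OF tau_hs])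
    then have "(\<Sum>m\<in>{n}. Re (\<tau> (i, m) a a)) \<le> Re (R i a a)"
      by (rule finite_sum_le_has_sum) (auto simp: d0)
    then show ?thesis by simp
  qed
  have Rdiag: "Re (R i a a) \<le> Re (Om a a)" for i a
  proof -
    have "(\<Sum>j\<in>{i}. Re (R j a a)) \<le> (\<Sum>\<^sub>\<infinity>j. Re (R j a a))"
      by (rule finite_sum_le_infsum[OF fam_Dsec[OF Rmm F1]]) (auto simp: mm_diag_nonneg[OF Rmm])
    then show ?thesis unfolding Om_def by (simp add: fam_Re_diag[OF Rmm F1])
  qed
  have ds: "(\<lambda>k. Re (\<tau> k a a)) summable_on UNIV" for a
  proof (rule nonneg_bdd_above_summable_on)
    show "0 \<le> Re (\<tau> k a a)" for k by (rule d0)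
    show "bdd_above (sum (\<lambda>k. Re (\<tau> k a a)) ` {F. F \<subseteq> UNIV \<and> finite F})"
    proof (rule bdd_aboveI2)
      fix F :: "('i \<times> nat) set" assume "F \<in> {F. F \<subseteq> UNIV \<and> finite F}"
      then have fin: "finite F" by simp
      have "(\<Sum>k\<in>F. Re (\<tau> k a a)) \<le> (\<Sum>k\<in>fst ` F \<times> snd ` F. Re (\<tau> k a a))"
        by (rule sum_mono2[OF _ subset_fst_snd]) (use fin d0 in \<open>auto simp: finite_cartesian_product\<close>)
      also have "\<dots> = (\<Sum>i\<in>fst ` F. \<Sum>n\<in>snd ` F. Re (\<tau> (i, n) a a))"
        by (subst sum.cartesian_product) (simp add: case_prod_unfold)
      also have "\<dots> \<le> (\<Sum>i\<in>fst ` F. Re (R i a a))"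
      proof (rule sum_mono)
        fix i
        have "((\<lambda>n. Re (\<tau> (i, n) a a)) has_sum Re (R i a a)) UNIV" by (rule has_sum_Re[OF tau_hs])
        then show "(\<Sum>n\<in>snd ` F. Re (\<tau> (i, n) a a)) \<le> Re (R i a a)"
          by (rule finite_sum_le_has_sum) (use fin d0 in auto)
      qed
      also have "\<dots> \<le> (\<Sum>\<^sub>\<infinity>i. Re (R i a a))"
        by (rule finite_sum_le_infsum[OF fam_Dsec[OF Rmm F1]]) (use fin mm_diag_nonneg[OF Rmm] in auto)
      finally show "(\<Sum>k\<in>F. Re (\<tau> k a a)) \<le> (\<Sum>\<^sub>\<infinity>i. Re (R i a a))" .
    qed
  qed
  have tsum: "(\<lambda>k. \<tau> k a b) summable_on UNIV" for a b
  proof -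
    have "(\<lambda>k. Re (\<tau> k a a) + Re (\<tau> k b b)) summable_on UNIV"
      by (rule summable_on_add[OF ds ds])
    then have "(\<lambda>k. (Re (\<tau> k a a) + Re (\<tau> k b b)) / 2) summable_on UNIV"
      using has_sum_divide_const[of _ UNIV _ 2] unfolding summable_on_def by blast
    then have "(\<lambda>k. norm (\<tau> k a b)) summable_on UNIV"
      by (rule Infinite_Sum.abs_summable_on_comparison_test') (rule tcs)
    then show ?thesis by (rule Infinite_Sum.abs_summable_summable)
  qed
  have ths: "((\<lambda>k. \<tau> k a b) has_sum Om a b) UNIV" for a b
  proof -
    have s: "(\<lambda>k. \<tau> k a b) summable_on Sigma UNIV (\<lambda>_. UNIV)" using tsum[of a b] by simp
    have "(\<Sum>\<^sub>\<infinity>i. \<Sum>\<^sub>\<infinity>n. \<tau> (i, n) a b) = (\<Sum>\<^sub>\<infinity>k\<in>Sigma UNIV (\<lambda>_. UNIV). \<tau> k a b)"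
      by (rule infsum_Sigma_banach[OF s])
    moreover have "(\<Sum>\<^sub>\<infinity>i. \<Sum>\<^sub>\<infinity>n. \<tau> (i, n) a b) = Om a b"
      unfolding Om_def by (rule infsum_cong) (rule infsumI[OF tau_hs])
    ultimately have "(\<Sum>\<^sub>\<infinity>k. \<tau> k a b) = Om a b" by simp
    then show ?thesis using has_sum_infsum[OF tsum[of a b]] by simp
  qed
  define S where "S = {k. \<exists>a b. \<tau> k a b \<noteq> 0}"
  define C where "C = {a. Re (Om a a) \<noteq> 0}"
  have cC: "countable C"
    using summable_countable_real[OF mm_diag_summable[OF Omm]] unfolding C_def by simp
  have cSa: "countable {k. Re (\<tau> k a a) \<noteq> 0}" for a
    using summable_countable_real[OF ds[of a]] by simp
  have "S \<subseteq> (\<Union>a\<in>C. {k. Re (\<tau> k a a) \<noteq> 0})"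
  proof
    fix k assume "k \<in> S"
    then obtain a b where ab: "\<tau> k a b \<noteq> 0" unfolding S_def by blast
    then have "0 < cmod (\<tau> k a b)" by simp
    then have "0 < (Re (\<tau> k a a) + Re (\<tau> k b b)) / 2" using tcs[of k a b] by (rule less_le_trans)
    then have sum_pos: "0 < Re (\<tau> k a a) + Re (\<tau> k b b)" by simp
    obtain c where c: "0 < Re (\<tau> k c c)"
    proof (cases "0 < Re (\<tau> k a a)")
      case True
      then show ?thesis by (rule that)
    next
      case False
      then have "0 < Re (\<tau> k b b)" using sum_pos by linarith
      then show ?thesis by (rule that)
    qed
    obtain i n where k: "k = (i, n)" by (cases k)
    have "0 < Re (Om c c)" using c dR[of i n c] Rdiag[of i c] unfolding k by linarith
    then show "k \<in> (\<Union>a\<in>C. {k. Re (\<tau> k a a) \<noteq> 0})" unfolding C_def using c by (intro UN_I[of c]) auto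
  qed
  have nS: "\<tau> k a b = 0" if "k \<notin> S" for k a b using that unfolding S_def by blast
  have cS: "countable S" using \<open>S \<subseteq> _\<close> by (rule countable_subset) (use cC cSa in blast)
  then obtain h :: "'i \<times> nat \<Rightarrow> nat" where h: "inj_on h S" by (rule countableE)
  define Z where "Z = (\<lambda>(_::'v) (_::'v). 0::complex)"
  define Z' where "Z' = (\<lambda>(_::'w) (_::'w). 0::complex)"
  define \<rho>s where "\<rho>s m = (if m \<in> h ` S then P (fst (inv_into S h m)) (snd (inv_into S h m)) else Z)" for m
  define \<sigma>s where "\<sigma>s m = (if m \<in> h ` S then Q (fst (inv_into S h m)) (snd (inv_into S h m)) else Z')" for m
  have mmi: "mixed_memory (\<rho>s m) \<and> mixed_memory (\<sigma>s m)" for m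
    unfolding \<rho>s_def \<sigma>s_def Z_def Z'_def using Pm Qm by (auto intro: zero_mm)
  have hs: "((\<lambda>m. tensor (\<rho>s m) (\<sigma>s m) a b) has_sum Om a b) UNIV" for a b
  proof -
    define g where "g m = \<tau> (inv_into S h m) a b" for m
    have "((\<lambda>k. \<tau> k a b) has_sum Om a b) S"
      by (subst has_sum_cong_neutral[where T=UNIV and g="\<lambda>k. \<tau> k a b"]) (use nS ths in auto)
    then have "((g \<circ> h) has_sum Om a b) S"
      by (subst has_sum_cong_neutral[where T=S and g="\<lambda>k. \<tau> k a b"]) (auto simp: g_def h)
    then have "(g has_sum Om a b) (h ` S)" by (subst has_sum_reindex[OF h])
    moreover have "tensor (\<rho>s m) (\<sigma>s m) a b = (if m \<in> h ` S then g m else 0)" for m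
      unfolding \<rho>s_def \<sigma>s_def g_def \<tau>_def Z_def Z'_def tensor_def by (auto simp: case_prod_unfold)
    ultimately show ?thesis
      by (subst has_sum_cong_neutral[where T="h ` S" and g=g]) auto
  qed
  show ?thesis unfolding separable_def Om_def[symmetric]
    by (intro exI[of _ \<rho>s] exI[of _ \<sigma>s] conjI allI mmi[THEN conjunct1] mmi[THEN conjunct2])
       (unfold mm_has_sum_def, use Omm hs in blast)
qed




theorem lemma13:
  fixes A :: "((('x \<times> 'e) \<times> 'u) \<Rightarrow> complex) set"
    and \<rho> :: "'i \<Rightarrow> 'x \<Rightarrow> 'x \<Rightarrow> complex"
    and \<sigma> :: "'x \<Rightarrow> 'x \<Rightarrow> complex"
  assumes "is_predicate A"
    and "\<forall>i. mixed_memory (\<rho> i)"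
    and "\<forall>i. satisfies (\<rho> i) A"
    and "mm_has_sum \<rho> UNIV \<sigma>"
  shows "satisfies \<sigma> A"
proof -
  have hs: "((\<lambda>i. \<rho> i x y) has_sum \<sigma> x y) UNIV" for x y
    using assms(4) unfolding mm_has_sum_def by auto
  have "\<forall>i. \<exists>r :: (('x \<times> 'e) \<times> 'u) \<Rightarrow> (('x \<times> 'e) \<times> 'u) \<Rightarrow> complex.
      mixed_memory r \<and> separable r \<and> supp r \<subseteq> A \<and> ptrace_EU r = \<rho> i"
    using assms(3) unfolding satisfies_def by blast
  from choice[OF this] obtain R where R: "\<forall>i. mixed_memory (R i) \<and> separable (R i) \<and> supp (R i) \<subseteq> A \<and> ptrace_EU (R i) = \<rho> i"
    by blast
  have Rmm: "\<And>i. mixed_memory (R i)" and Rsupp: "\<And>i. supp (R i) \<subseteq> A"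
    and Rtr: "\<And>i. ptrace_EU (R i) = \<rho> i" and Rsep: "\<And>i. separable (R i)" using R by auto
  have "\<forall>i. \<exists>PQ :: (nat \<Rightarrow> ('x \<times> 'e) \<Rightarrow> ('x \<times> 'e) \<Rightarrow> complex) \<times> (nat \<Rightarrow> 'u \<Rightarrow> 'u \<Rightarrow> complex).
      (\<forall>n. mixed_memory (fst PQ n) \<and> mixed_memory (snd PQ n)) \<and>
      mm_has_sum (\<lambda>n. tensor (fst PQ n) (snd PQ n)) UNIV (R i)"
  proof
    fix i
    have "\<exists>(P :: nat \<Rightarrow> ('x \<times> 'e) \<Rightarrow> ('x \<times> 'e) \<Rightarrow> complex) (Q :: nat \<Rightarrow> 'u \<Rightarrow> 'u \<Rightarrow> complex).
      (\<forall>n. mixed_memory (P n) \<and> mixed_memory (Q n)) \<and>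
      mm_has_sum (\<lambda>n. tensor (P n) (Q n)) UNIV (R i)"
      using Rsep[of i] unfolding separable_def .
    then show "\<exists>PQ :: (nat \<Rightarrow> ('x \<times> 'e) \<Rightarrow> ('x \<times> 'e) \<Rightarrow> complex) \<times> (nat \<Rightarrow> 'u \<Rightarrow> 'u \<Rightarrow> complex).
      (\<forall>n. mixed_memory (fst PQ n) \<and> mixed_memory (snd PQ n)) \<and>
      mm_has_sum (\<lambda>n. tensor (fst PQ n) (snd PQ n)) UNIV (R i)"
    proof (elim exE)
      fix P :: "nat \<Rightarrow> ('x \<times> 'e) \<Rightarrow> ('x \<times> 'e) \<Rightarrow> complex" and Q :: "nat \<Rightarrow> 'u \<Rightarrow> 'u \<Rightarrow> complex"
      assume h: "(\<forall>n. mixed_memory (P n) \<and> mixed_memory (Q n)) \<and>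
        mm_has_sum (\<lambda>n. tensor (P n) (Q n)) UNIV (R i)"
      show "\<exists>PQ :: (nat \<Rightarrow> ('x \<times> 'e) \<Rightarrow> ('x \<times> 'e) \<Rightarrow> complex) \<times> (nat \<Rightarrow> 'u \<Rightarrow> 'u \<Rightarrow> complex).
        (\<forall>n. mixed_memory (fst PQ n) \<and> mixed_memory (snd PQ n)) \<and>
        mm_has_sum (\<lambda>n. tensor (fst PQ n) (snd PQ n)) UNIV (R i)"
      proof (rule exI)
        show "(\<forall>n. mixed_memory (fst (P, Q) n) \<and> mixed_memory (snd (P, Q) n)) \<and>
          mm_has_sum (\<lambda>n. tensor (fst (P, Q) n) (snd (P, Q) n)) UNIV (R i)"
          using h by simp
      qed
    qed
  qed
  from choice[OF this] obtain PQ :: "'i \<Rightarrow> (nat \<Rightarrow> ('x \<times> 'e) \<Rightarrow> ('x \<times> 'e) \<Rightarrow> complex) \<times> (nat \<Rightarrow> 'u \<Rightarrow> 'u \<Rightarrow> complex)" where PQ: "\<forall>i. (\<forall>n. mixed_memory (fst (PQ i) n) \<and> mixed_memory (snd (PQ i) n)) \<and>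
      mm_has_sum (\<lambda>n. tensor (fst (PQ i) n) (snd (PQ i) n)) UNIV (R i)"
    by blast
  define trs where "trs = (\<Sum>\<^sub>\<infinity>x. Re (\<sigma> x x))"
  have F1: "(\<lambda>(i,a). Re (R i a a)) summable_on UNIV"
  proof (rule nonneg_bdd_above_summable_on)
    show "0 \<le> (\<lambda>(i,a). Re (R i a a)) p" for p by (cases p) (simp add: mm_diag_nonneg[OF Rmm])
    show "bdd_above (sum (\<lambda>(i,a). Re (R i a a)) ` {F. F \<subseteq> UNIV \<and> finite F})"
    proof (rule bdd_aboveI2)
      fix F :: "('i \<times> (('x \<times> 'e) \<times> 'u)) set" assume "F \<in> {F. F \<subseteq> UNIV \<and> finite F}"
      then have fin: "finite F" by simp
      have "(\<Sum>p\<in>F. (\<lambda>(i,a). Re (R i a a)) p) \<le> (\<Sum>p\<in>fst ` F \<times> snd ` F. (\<lambda>(i,a). Re (R i a a)) p)"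
        by (rule sum_mono2[OF _ subset_fst_snd])
           (use fin in \<open>auto simp: finite_cartesian_product mm_diag_nonneg[OF Rmm]\<close>)
      also have "\<dots> = (\<Sum>i\<in>fst ` F. \<Sum>a\<in>snd ` F. Re (R i a a))"
        by (subst sum.cartesian_product) (simp add: case_prod_unfold)
      also have "\<dots> \<le> (\<Sum>i\<in>fst ` F. \<Sum>\<^sub>\<infinity>a. Re (R i a a))"
        by (rule sum_mono, rule finite_sum_le_infsum[OF mm_diag_summable[OF Rmm]])
           (use fin mm_diag_nonneg[OF Rmm] in auto)
      also have "\<dots> = (\<Sum>i\<in>fst ` F. \<Sum>\<^sub>\<infinity>x. Re (\<rho> i x x))"
        by (rule sum.cong[OF refl]) (use tr_ptrace[OF Rmm] Rtr in simp)
      also have "\<dots> \<le> trs" unfolding trs_def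
        by (rule tr_sum_le[OF assms(2) assms(4)]) (use fin in simp)
      finally show "(\<Sum>p\<in>F. (\<lambda>(i,a). Re (R i a a)) p) \<le> trs" .
    qed
  qed
  define Om where "Om = (\<lambda>a b. \<Sum>\<^sub>\<infinity>i. R i a b)"
  have "mixed_memory Om" unfolding Om_def by (rule fam_mm[OF Rmm F1])
  moreover have "separable Om" unfolding Om_def
    by (rule fam_sep[OF Rmm F1, of "\<lambda>i. fst (PQ i)" "\<lambda>i. snd (PQ i)"]) (use PQ in auto)
  moreover have "supp Om \<subseteq> A" unfolding Om_def by (rule fam_supp[OF Rmm F1 assms(1) Rsupp])
  moreover have "ptrace_EU Om = \<sigma>"
  proof (intro ext)
    fix x x'
    have "ptrace_EU Om x x' = (\<Sum>\<^sub>\<infinity>i. ptrace_EU (R i) x x')"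
      unfolding Om_def by (rule fam_ptrace[OF Rmm F1])
    also have "\<dots> = \<sigma> x x'" unfolding Rtr by (rule infsumI[OF hs])
    finally show "ptrace_EU Om x x' = \<sigma> x x'" .
  qed
  ultimately show ?thesis unfolding satisfies_def by blast
qed


end
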